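(* Let $G$ be a graph with a tight clique cutset $Q$, let $H$ be a tight component of $G-Q$, and let $V_2 = V(G)\setminus V(H)$. Let $\ell \ge \chi(G)+1$ and let $\alpha,\beta$ be two $\ell$-colourings of $G$ whose restrictions to $V_2$ are equal. Suppose $H$ is $\ell_1$-mixing for every integer $\ell_1 \ge \chi(H)+1$. Then there is a path between $\alpha$ and $\beta$ in $\mathcal{R}_\ell(G)$.
   Context: All graphs are finite and simple. A $k$-colouring is a proper colouring with colours $\{1,\dots,k\}$; $\chi$ denotes chromatic number. $\mathcal{R}_k(G)$ has the $k$-colourings of $G$ as vertices, two being adjacent if they differ on exactly one vertex; $G$ is $k$-mixing if $\mathcal{R}_k(G)$ is connected. A clique cutset of $G$ is a clique $Q$ such that $G-Q$ has more components than $G$. A clique cutset $Q$ is tight if some component $H$ of $G-Q$ is complete to $Q$ (every vertex of $H$ adjacent to every vertex of $Q$); such an $H$ is a tight component. *)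

theory Defs
  imports Main
begin

definition graph :: "'a set \<Rightarrow> ('a \<Rightarrow> 'a \<Rightarrow> bool) \<Rightarrow> bool" where
  "graph V E \<longleftrightarrow> finite V \<and> (\<forall>u v. E u v \<longrightarrow> u \<in> V \<and> v \<in> V)
     \<and> (\<forall>u v. E u v \<longrightarrow> E v u) \<and> (\<forall>v. \<not> E v v)"

definition induced :: "('a \<Rightarrow> 'a \<Rightarrow> bool) \<Rightarrow> 'a set \<Rightarrow> 'a \<Rightarrow> 'a \<Rightarrow> bool" where
  "induced E S = (\<lambda>u v. E u v \<and> u \<in> S \<and> v \<in> S)"

definition components :: "'a set \<Rightarrow> ('a \<Rightarrow> 'a \<Rightarrow> bool) \<Rightarrow> 'a set set" where
  "components V E = {{y. (induced E V)\<^sup>*\<^sup>* x y} | x. x \<in> V}"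

definition clique :: "('a \<Rightarrow> 'a \<Rightarrow> bool) \<Rightarrow> 'a set \<Rightarrow> bool" where
  "clique E Q \<longleftrightarrow> (\<forall>u\<in>Q. \<forall>v\<in>Q. u \<noteq> v \<longrightarrow> E u v)"

definition clique_cutset :: "'a set \<Rightarrow> ('a \<Rightarrow> 'a \<Rightarrow> bool) \<Rightarrow> 'a set \<Rightarrow> bool" where
  "clique_cutset V E Q \<longleftrightarrow> Q \<subseteq> V \<and> clique E Q \<and>
     card (components (V - Q) (induced E (V - Q))) > card (components V E)"

definition complete_to :: "('a \<Rightarrow> 'a \<Rightarrow> bool) \<Rightarrow> 'a set \<Rightarrow> 'a set \<Rightarrow> bool" where
  "complete_to E A B \<longleftrightarrow> (\<forall>a\<in>A. \<forall>b\<in>B. E a b)"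

definition tight_component :: "'a set \<Rightarrow> ('a \<Rightarrow> 'a \<Rightarrow> bool) \<Rightarrow> 'a set \<Rightarrow> 'a set \<Rightarrow> bool" where
  "tight_component V E Q H \<longleftrightarrow> clique_cutset V E Q \<and>
     H \<in> components (V - Q) (induced E (V - Q)) \<and> complete_to E H Q"

text \<open>k-colourings with colours 1..k; by convention a colouring is 0 outside V,
  so colourings of G are identified with functions on V.\<close>
definition colouring :: "'a set \<Rightarrow> ('a \<Rightarrow> 'a \<Rightarrow> bool) \<Rightarrow> nat \<Rightarrow> ('a \<Rightarrow> nat) \<Rightarrow> bool" where
  "colouring V E k c \<longleftrightarrow> (\<forall>v\<in>V. c v \<in> {1..k}) \<and> (\<forall>v. v \<notin> V \<longrightarrow> c v = 0)
     \<and> (\<forall>u\<in>V. \<forall>v\<in>V. E u v \<longrightarrow> c u \<noteq> c v)"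

definition chromatic_number :: "'a set \<Rightarrow> ('a \<Rightarrow> 'a \<Rightarrow> bool) \<Rightarrow> nat" where
  "chromatic_number V E = (LEAST k. \<exists>c. colouring V E k c)"

definition recol_adj :: "'a set \<Rightarrow> ('a \<Rightarrow> 'a \<Rightarrow> bool) \<Rightarrow> nat \<Rightarrow> ('a \<Rightarrow> nat) \<Rightarrow> ('a \<Rightarrow> nat) \<Rightarrow> bool" where
  "recol_adj V E k c d \<longleftrightarrow> colouring V E k c \<and> colouring V E k d \<and>
     card {v\<in>V. c v \<noteq> d v} = 1"

definition mixing :: "'a set \<Rightarrow> ('a \<Rightarrow> 'a \<Rightarrow> bool) \<Rightarrow> nat \<Rightarrow> bool" where
  "mixing V E k \<longleftrightarrow> (\<forall>c d. colouring V E k c \<longrightarrow> colouring V E k d \<longrightarrow>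
     (recol_adj V E k)\<^sup>*\<^sup>* c d)"

end

theory Submission
  imports Defs
begin

lemma col_pr: "colouring V E k c \<Longrightarrow> u \<in> V \<Longrightarrow> v \<in> V \<Longrightarrow> E u v \<Longrightarrow> c u \<noteq> c v"
  unfolding colouring_def by blast
lemma col_rg: "colouring V E k c \<Longrightarrow> v \<in> V \<Longrightarrow> c v \<in> {1..k}"
  unfolding colouring_def by blast
lemma col_out: "colouring V E k c \<Longrightarrow> v \<notin> V \<Longrightarrow> c v = 0"
  unfolding colouring_def by blast

lemma ct: "complete_to E A B \<Longrightarrow> a \<in> A \<Longrightarrow> b \<in> B \<Longrightarrow> E a b"
  unfolding complete_to_def by blast

lemma compress_col:
  assumes f: "bij_betw f P {1..m}" and cP: "\<forall>v\<in>H. c v \<in> P"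
    and pr: "\<forall>u\<in>H. \<forall>v\<in>H. E u v \<longrightarrow> c u \<noteq> c v"
  shows "colouring H (induced E H) m (\<lambda>v. if v\<in>H then f (c v) else 0)"
proof -
  have inj: "inj_on f P" using f bij_betw_def by blast
  show ?thesis unfolding colouring_def induced_def
    using cP pr f inj bij_betwE[OF f] by (auto simp: inj_on_eq_iff[OF inj])
qed

lemma comp_props:
  assumes "H \<in> components (V - Q) (induced E (V - Q))"
  shows "H \<subseteq> V - Q" and "\<And>u v. u \<in> H \<Longrightarrow> v \<in> V - Q \<Longrightarrow> E u v \<Longrightarrow> v \<in> H"
proof -
  obtain x where Hx: "H = {y. (induced (induced E (V-Q)) (V-Q))\<^sup>*\<^sup>* x y}" and x: "x \<in> V - Q"
    using assms unfolding components_def by blast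
  show "H \<subseteq> V - Q"
  proof
    fix y assume "y \<in> H"
    then have "(induced (induced E (V-Q)) (V-Q))\<^sup>*\<^sup>* x y" using Hx by blast
    then show "y \<in> V - Q"
      by (cases rule: rtranclp.cases) (use x in \<open>auto simp: induced_def\<close>)
  qed
  fix u v assume u: "u \<in> H" and v: "v \<in> V - Q" and e: "E u v"
  have "u \<in> V - Q" using u \<open>H \<subseteq> V - Q\<close> by blast
  then have "(induced (induced E (V-Q)) (V-Q)) u v" using v e by (simp add: induced_def)
  then have "(induced (induced E (V-Q)) (V-Q))\<^sup>*\<^sup>* x v" using u Hx
    by (auto intro: rtranclp.rtrancl_into_rtrancl)
  then show "v \<in> H" using Hx by blast
qed

lemma chrom_le:
  assumes "colouring V E k c"
  shows "chromatic_number V E \<le> k" and "\<exists>c. colouring V E (chromatic_number V E) c"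
  using assms unfolding chromatic_number_def
  by (auto intro: Least_le LeastI)

theorem lemma6:
  fixes V :: "'a set" and E :: "'a \<Rightarrow> 'a \<Rightarrow> bool" and Q H :: "'a set"
    and l :: nat and \<alpha> \<beta> :: "'a \<Rightarrow> nat"
  assumes "graph V E"
    and "tight_component V E Q H"
    and "l \<ge> chromatic_number V E + 1"
    and "colouring V E l \<alpha>" and "colouring V E l \<beta>"
    and "\<forall>v \<in> V - H. \<alpha> v = \<beta> v"
    and "\<forall>l1. l1 \<ge> chromatic_number H (induced E H) + 1 \<longrightarrow> mixing H (induced E H) l1"
  shows "(recol_adj V E l)\<^sup>*\<^sup>* \<alpha> \<beta>"
proof -
  have finV: "finite V" using assms(1) graph_def by blast
  have tc: "clique_cutset V E Q" "H \<in> components (V - Q) (induced E (V - Q))" "complete_to E H Q"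
    using assms(2) by (simp_all add: tight_component_def)
  have QV: "Q \<subseteq> V" and clQ: "clique E Q"
    using tc(1) by (simp_all add: clique_cutset_def)
  have Hc: "H \<in> components (V - Q) (induced E (V - Q))" and HQ: "complete_to E H Q"
    using tc(2,3) by simp_all
  have finQ: "finite Q" using finV QV finite_subset by blast
  have HVQ: "H \<subseteq> V - Q" using comp_props(1)[OF Hc] .
  have Hcl: "\<And>u v. u \<in> H \<Longrightarrow> v \<in> V - Q \<Longrightarrow> E u v \<Longrightarrow> v \<in> H" using comp_props(2)[OF Hc] .
  have injQ: "inj_on c Q" if cc: "colouring V E k c" for c k
  proof (rule inj_onI)
    fix x y assume xy: "x \<in> Q" "y \<in> Q" "c x = c y"
    show "x = y"
    proof (rule ccontr)
      assume "x \<noteq> y"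
      then have "E x y" using clQ xy unfolding clique_def by blast
      then show False using col_pr[OF cc, of x y] xy QV by blast
    qed
  qed
  define k where "k = chromatic_number V E"
  obtain c where c: "colouring V E k c" using chrom_le(2)[OF assms(4)] k_def by blast
  have cQ: "c ` Q \<subseteq> {1..k}" using col_rg[OF c] QV by blast
  have ccard: "card (c ` Q) = card Q" using card_image[OF injQ[OF c]] .
  define P' where "P' = {1..k} - c ` Q"
  have cardP': "card P' = k - card Q" unfolding P'_def
    using card_Diff_subset[OF finite_imageI[OF finQ] cQ] ccard by simp
  have QleK: "card Q \<le> k" using card_mono[OF _ cQ] ccard by simp
  obtain f' where f': "bij_betw f' P' {1..k - card Q}"
    using finite_same_card_bij[of P' "{1..k - card Q}"] cardP' P'_def by auto
  have "colouring H (induced E H) (k - card Q) (\<lambda>v. if v\<in>H then f' (c v) else 0)"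
  proof (rule compress_col[OF f'])
    show "\<forall>v\<in>H. c v \<in> P'"
    proof
      fix v assume v: "v \<in> H"
      have "c v \<in> {1..k}" using col_rg[OF c] v HVQ by blast
      moreover have "c v \<notin> c ` Q"
      proof
        assume "c v \<in> c ` Q"
        then obtain q where "q \<in> Q" "c v = c q" by auto
        moreover have "E v q" using ct[OF HQ v \<open>q \<in> Q\<close>] .
        ultimately show False using col_pr[OF c, of v q] v HVQ QV by blast
      qed
      ultimately show "c v \<in> P'" unfolding P'_def by blast
    qed
    show "\<forall>u\<in>H. \<forall>v\<in>H. E u v \<longrightarrow> c u \<noteq> c v" using col_pr[OF c] HVQ by blast
  qed
  then have "chromatic_number H (induced E H) \<le> k - card Q" by (rule chrom_le(1))
  then have chH: "chromatic_number H (induced E H) + card Q \<le> k"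
    using QleK by linarith
  define P where "P = {1..l} - \<alpha> ` Q"
  define m where "m = l - card Q"
  have aQ: "\<alpha> ` Q \<subseteq> {1..l}" using col_rg[OF assms(4)] QV by blast
  have cardP: "card P = m" unfolding P_def m_def
    using card_Diff_subset[OF finite_imageI[OF finQ] aQ] card_image[OF injQ[OF assms(4)]] by simp
  obtain f where f: "bij_betw f P {1..m}"
    using finite_same_card_bij[of P "{1..m}"] cardP P_def by auto
  define g where "g = inv_into P f"
  have g: "bij_betw g {1..m} P" using bij_betw_inv_into[OF f] g_def by simp
  have gf: "\<And>x. x \<in> P \<Longrightarrow> g (f x) = x" using f g_def bij_betw_inv_into_left by fastforce
  have ginj: "inj_on g {1..m}" using g bij_betw_def by blast
  have gP: "\<And>x. x \<in> {1..m} \<Longrightarrow> g x \<in> P" using g bij_betwE by blast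
  have HP: "\<And>\<gamma>. colouring V E l \<gamma> \<Longrightarrow> \<forall>v\<in>Q. \<gamma> v = \<alpha> v \<Longrightarrow> \<forall>v\<in>H. \<gamma> v \<in> P"
  proof
    fix \<gamma> v assume gam: "colouring V E l \<gamma>" and eq: "\<forall>v\<in>Q. \<gamma> v = \<alpha> v" and v: "v \<in> H"
    have "\<gamma> v \<in> {1..l}" using col_rg[OF gam] v HVQ by blast
    moreover have "\<gamma> v \<notin> \<alpha> ` Q"
    proof
      assume "\<gamma> v \<in> \<alpha> ` Q"
      then obtain q where "q \<in> Q" "\<gamma> v = \<gamma> q" using eq by auto
      moreover have "E v q" using ct[OF HQ v \<open>q \<in> Q\<close>] .
      ultimately show False using col_pr[OF gam, of v q] v HVQ QV by blast
    qed
    ultimately show "\<gamma> v \<in> P" unfolding P_def by blast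
  qed
  have QnH: "\<forall>v\<in>Q. v \<in> V - H" using HVQ QV by blast
  define a' where "a' = (\<lambda>v. if v\<in>H then f (\<alpha> v) else 0)"
  define b' where "b' = (\<lambda>v. if v\<in>H then f (\<beta> v) else 0)"
  have a': "colouring H (induced E H) m a'" unfolding a'_def
  proof (rule compress_col[OF f])
    show "\<forall>v\<in>H. \<alpha> v \<in> P" using HP[OF assms(4)] assms(6) QnH by blast
    show "\<forall>u\<in>H. \<forall>v\<in>H. E u v \<longrightarrow> \<alpha> u \<noteq> \<alpha> v"
      using col_pr[OF assms(4)] HVQ by blast
  qed
  have b': "colouring H (induced E H) m b'" unfolding b'_def
  proof (rule compress_col[OF f])
    show "\<forall>v\<in>H. \<beta> v \<in> P" using assms(6) QnH by (intro HP[OF assms(5)]) auto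
    show "\<forall>u\<in>H. \<forall>v\<in>H. E u v \<longrightarrow> \<beta> u \<noteq> \<beta> v"
      using col_pr[OF assms(5)] HVQ by blast
  qed
  have "m \<ge> chromatic_number H (induced E H) + 1" using chH assms(3) k_def m_def by linarith
  then have "mixing H (induced E H) m" using assms(7) by blast
  then have path: "(recol_adj H (induced E H) m)\<^sup>*\<^sup>* a' b'" using a' b' mixing_def by blast
  define lift where "lift = (\<lambda>d v. if v \<in> H then g (d v) else \<alpha> v)"
  have liftH: "\<And>d v. v \<in> H \<Longrightarrow> lift d v = g (d v)" unfolding lift_def by simp
  have liftN: "\<And>d v. v \<notin> H \<Longrightarrow> lift d v = \<alpha> v" unfolding lift_def by simp
  have liftcol: "colouring V E l (lift d)" if d: "colouring H (induced E H) m d" for d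
  proof -
    have dH: "\<And>v. v \<in> H \<Longrightarrow> d v \<in> {1..m}" using col_rg[OF d] by blast
    have dP: "\<And>v. v \<in> H \<Longrightarrow> g (d v) \<in> P" using gP dH by blast
    have r: "\<forall>v\<in>V. lift d v \<in> {1..l}"
    proof
      fix v assume v: "v \<in> V"
      show "lift d v \<in> {1..l}"
      proof (cases "v \<in> H")
        case True then show ?thesis using dP[OF True] liftH[OF True] unfolding P_def by simp
      next
        case False then show ?thesis using col_rg[OF assms(4) v] liftN[OF False] by simp
      qed
    qed
    have o: "\<forall>v. v \<notin> V \<longrightarrow> lift d v = 0"
    proof (intro allI impI)
      fix v assume v: "v \<notin> V"
      then have "v \<notin> H" using HVQ by blast
      then show "lift d v = 0" using liftN col_out[OF assms(4) v] by simp
    qed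
    have mixed: "lift d x \<noteq> lift d y" if x: "x \<in> H" and y: "y \<in> V" "y \<notin> H" and exy: "E x y" for x y
    proof -
      have "y \<in> Q" using Hcl[OF x _ exy] y by blast
      then have "\<alpha> y \<in> \<alpha> ` Q" by blast
      moreover have "g (d x) \<in> P" using dP x by blast
      ultimately have "g (d x) \<noteq> \<alpha> y" unfolding P_def by (metis DiffD2)
      then show ?thesis using liftH[OF x] liftN[OF y(2)] by simp
    qed
    have p: "\<forall>u\<in>V. \<forall>v\<in>V. E u v \<longrightarrow> lift d u \<noteq> lift d v"
    proof (intro ballI impI)
      fix u v assume u: "u \<in> V" and v: "v \<in> V" and e: "E u v"
      have sym: "E v u" using e assms(1) unfolding graph_def by blast
      show "lift d u \<noteq> lift d v"
      proof (cases "u \<in> H")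
        case uH: True
        show ?thesis
        proof (cases "v \<in> H")
          case vH: True
          have "induced E H u v" using e uH vH by (simp add: induced_def)
          then have "d u \<noteq> d v" using col_pr[OF d uH vH] by blast
          then have "g (d u) \<noteq> g (d v)" using inj_on_eq_iff[OF ginj dH[OF uH] dH[OF vH]] by blast
          then show ?thesis using liftH[OF uH] liftH[OF vH] by simp
        next
          case False show ?thesis using mixed[OF uH v False e] by simp
        qed
      next
        case uN: False
        show ?thesis
        proof (cases "v \<in> H")
          case vH: True
          show ?thesis using mixed[OF vH u uN sym] by simp
        next
          case vN: False
          show ?thesis using col_pr[OF assms(4) u v e] liftN[OF uN] liftN[OF vN] by simp
        qed
      qed
    qed
    show ?thesis unfolding colouring_def using r o p by blast
  qed
  have liftstep: "recol_adj V E l (lift d1) (lift d2)" if st: "recol_adj H (induced E H) m d1 d2" for d1 d2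
  proof -
    have d1: "colouring H (induced E H) m d1" and d2: "colouring H (induced E H) m d2"
      and cd: "card {v\<in>H. d1 v \<noteq> d2 v} = 1" using st unfolding recol_adj_def by simp_all
    have "{v\<in>V. lift d1 v \<noteq> lift d2 v} = {v\<in>H. d1 v \<noteq> d2 v}"
    proof (rule set_eqI)
      fix v
      show "v \<in> {v\<in>V. lift d1 v \<noteq> lift d2 v} \<longleftrightarrow> v \<in> {v\<in>H. d1 v \<noteq> d2 v}"
      proof (cases "v \<in> H")
        case True
        have "v \<in> V" using True HVQ by blast
        moreover have "(g (d1 v) = g (d2 v)) = (d1 v = d2 v)"
          using inj_on_eq_iff[OF ginj col_rg[OF d1 True] col_rg[OF d2 True]] .
        ultimately show ?thesis using True liftH[of v] by simp
      next
        case False then show ?thesis using liftN[OF False] by simp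
      qed
    qed
    then show ?thesis using cd liftcol[OF d1] liftcol[OF d2] unfolding recol_adj_def by simp
  qed
  have "(recol_adj V E l)\<^sup>*\<^sup>* (lift a') (lift b')"
    using path
  proof (induction rule: rtranclp_induct)
    case base then show ?case by simp
  next
    case (step y z) then show ?case using liftstep[of y z] by (simp add: rtranclp.rtrancl_into_rtrancl)
  qed
  moreover have "lift a' = \<alpha>"
  proof
    fix v show "lift a' v = \<alpha> v"
    proof (cases "v \<in> H")
      case True
      have "\<alpha> v \<in> P" using HP[OF assms(4)] True by blast
      then show ?thesis using gf liftH[OF True] True unfolding a'_def by simp
    next
      case False then show ?thesis using liftN[OF False] by simp
    qed
  qed
  moreover have "lift b' = \<beta>"
  proof
    fix v show "lift b' v = \<beta> v"
    proof (cases "v \<in> H")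
      case True
      have "\<forall>v\<in>Q. \<beta> v = \<alpha> v" using assms(6) QnH by auto
      then have "\<beta> v \<in> P" using HP[OF assms(5)] True by blast
      then show ?thesis using gf liftH[OF True] True unfolding b'_def by simp
    next
      case False
      show ?thesis
      proof (cases "v \<in> V")
        case True then show ?thesis using assms(6) False liftN[OF False] by simp
      next
        case vN: False then show ?thesis using col_out[OF assms(4) vN] col_out[OF assms(5) vN] liftN[OF False] by simp
      qed
    qed
  qed
  ultimately show ?thesis by simp
qed

end
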